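(* For any diagonal section $\delta$ and all $x,y\in[0,1]$, $$\overline{C}_\delta(x,y)=\min\left\{x,\;y,\;\max\{x,y\}-\frac12\left(\widehat{\delta}(x)+\widehat{\delta}(y)+\mathrm{TV}_{\min\{x,y\}}^{\max\{x,y\}}(\widehat{\delta})\right)\right\}.$$
   Context: $\mathbb{I}=[0,1]$. A (bivariate) copula is a function $C\colon\mathbb{I}^2\to\mathbb{I}$ with $C(x,0)=C(0,y)=0$, $C(x,1)=x$, $C(1,y)=y$ for all $x,y$, and $C(b,d)+C(a,c)-C(b,c)-C(a,d)\ge 0$ for all $a\le b$, $c\le d$. A diagonal section is a function $\delta\colon\mathbb{I}\to\mathbb{I}$ with $\delta(x)\le x$ for all $x$, $0\le\delta(y)-\delta(x)\le 2(y-x)$ whenever $x\le y$, and $\delta(1)=1$. Write $\widehat{\delta}(x)=x-\delta(x)$, and $\mathrm{TV}_x^y(f)$ for the total variation of $f$ on $[x,y]$ ($x\le y$). Define $\overline{C}_\delta(x,y)=\sup\{C(x,y): C \text{ a copula with } C(t,t)=\delta(t)\ \forall t\in\mathbb{I}\}$. *)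

theory Defs
  imports "HOL-Analysis.Analysis"
begin

definition copula :: "(real \<Rightarrow> real \<Rightarrow> real) \<Rightarrow> bool" where
  "copula C \<longleftrightarrow>
     (\<forall>x\<in>{0..1}. \<forall>y\<in>{0..1}. C x y \<in> {0..1}) \<and>
     (\<forall>x\<in>{0..1}. C x 0 = 0 \<and> C 0 x = 0 \<and> C x 1 = x \<and> C 1 x = x) \<and>
     (\<forall>a\<in>{0..1}. \<forall>b\<in>{0..1}. \<forall>c\<in>{0..1}. \<forall>d\<in>{0..1}.
        a \<le> b \<longrightarrow> c \<le> d \<longrightarrow> C b d + C a c - C b c - C a d \<ge> 0)"

definition diagonal_section :: "(real \<Rightarrow> real) \<Rightarrow> bool" where
  "diagonal_section \<delta> \<longleftrightarrow>
     (\<forall>x\<in>{0..1}. \<delta> x \<in> {0..1} \<and> \<delta> x \<le> x) \<and>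
     (\<forall>x\<in>{0..1}. \<forall>y\<in>{0..1}. x \<le> y \<longrightarrow> 0 \<le> \<delta> y - \<delta> x \<and> \<delta> y - \<delta> x \<le> 2 * (y - x)) \<and>
     \<delta> 1 = 1"

definition delta_hat :: "(real \<Rightarrow> real) \<Rightarrow> real \<Rightarrow> real" where
  "delta_hat \<delta> x = x - \<delta> x"

definition total_variation :: "(real \<Rightarrow> real) \<Rightarrow> real \<Rightarrow> real \<Rightarrow> real" where
  "total_variation f x y =
     Sup {(\<Sum>i<n. \<bar>f (t (Suc i)) - f (t i)\<bar>) | n t.
            t 0 = x \<and> t n = y \<and> (\<forall>i<n. t i \<le> t (Suc i))}"

definition upper_copula :: "(real \<Rightarrow> real) \<Rightarrow> real \<Rightarrow> real \<Rightarrow> real" where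
  "upper_copula \<delta> x y =
     Sup {C x y | C. copula C \<and> (\<forall>t\<in>{0..1}. C t t = \<delta> t)}"

end

theory Submission
  imports Defs
begin

lemma chain_mono:
  assumes "\<forall>i<n. t i \<le> (t (Suc i) :: real)" "i \<le> j" "j \<le> n"
  shows "t i \<le> t j"
  using assms(2,3)
proof (induction j)
  case 0 then show ?case by simp
next
  case (Suc j)
  show ?case
  proof (cases "i = Suc j")
    case True then show ?thesis by simp
  next
    case False
    then have "i \<le> j" using Suc.prems by simp
    then have "t i \<le> t j" using Suc by simp
    also have "\<dots> \<le> t (Suc j)" using assms(1) Suc.prems by simp
    finally show ?thesis .
  qed
qed

lemma ds_props:
  assumes "diagonal_section \<delta>"
  shows "\<And>u. u \<in> {0..1} \<Longrightarrow> 0 \<le> \<delta> u \<and> \<delta> u \<le> u"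
    and "\<And>u w. u \<in> {0..1} \<Longrightarrow> w \<in> {0..1} \<Longrightarrow> u \<le> w \<Longrightarrow> \<delta> u \<le> \<delta> w \<and> \<delta> w - \<delta> u \<le> 2 * (w - u)"
    and "\<delta> 1 = 1" and "\<delta> 0 = 0"
proof -
  have A: "\<forall>x\<in>{0..1}. \<delta> x \<in> {0..1} \<and> \<delta> x \<le> x"
    and B: "\<forall>x\<in>{0..1}. \<forall>y\<in>{0..1}. x \<le> y \<longrightarrow> 0 \<le> \<delta> y - \<delta> x \<and> \<delta> y - \<delta> x \<le> 2 * (y - x)"
    and C: "\<delta> 1 = 1" using assms unfolding diagonal_section_def by blast+
  show "\<And>u. u \<in> {0..1} \<Longrightarrow> 0 \<le> \<delta> u \<and> \<delta> u \<le> u" using A by auto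
  show "\<And>u w. u \<in> {0..1} \<Longrightarrow> w \<in> {0..1} \<Longrightarrow> u \<le> w \<Longrightarrow> \<delta> u \<le> \<delta> w \<and> \<delta> w - \<delta> u \<le> 2 * (w - u)"
    using B by auto
  show "\<delta> 1 = 1" by (rule C)
  have "(0::real) \<in> {0..1}" by simp
  then have "\<delta> 0 \<in> {0..1}" "\<delta> 0 \<le> 0" using A by blast+
  then show "\<delta> 0 = 0" by simp
qed

lemma h_lip:
  assumes "diagonal_section \<delta>" "u \<in> {0..1}" "w \<in> {0..1}" "u \<le> w"
  shows "\<bar>delta_hat \<delta> w - delta_hat \<delta> u\<bar> \<le> w - u"
  using ds_props(2)[OF assms(1) assms(2,3,4)] unfolding delta_hat_def by auto

definition psum :: "(real \<Rightarrow> real) \<Rightarrow> nat \<Rightarrow> (nat \<Rightarrow> real) \<Rightarrow> real" where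
  "psum f n t = (\<Sum>i<n. \<bar>f (t (Suc i)) - f (t i)\<bar>)"

definition ispart :: "real \<Rightarrow> real \<Rightarrow> nat \<Rightarrow> (nat \<Rightarrow> real) \<Rightarrow> bool" where
  "ispart x y n t \<longleftrightarrow> t 0 = x \<and> t n = y \<and> (\<forall>i<n. t i \<le> t (Suc i))"

lemma tv_eq: "total_variation f x y = Sup {psum f n t | n t. ispart x y n t}"
  unfolding total_variation_def psum_def ispart_def by simp

lemma psum_le:
  assumes "diagonal_section \<delta>" "0 \<le> s" "t1 \<le> 1" "ispart s t1 n p"
  shows "psum (delta_hat \<delta>) n p \<le> t1 - s"
proof -
  have mono: "\<forall>i<n. p i \<le> p (Suc i)" using assms(4) ispart_def by auto
  have rng: "\<And>i. i \<le> n \<Longrightarrow> p i \<in> {0..1}"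
  proof -
    fix i assume "i \<le> n"
    then have "p 0 \<le> p i" "p i \<le> p n" using chain_mono[OF mono] by auto
    then show "p i \<in> {0..1}" using assms ispart_def by auto
  qed
  have "psum (delta_hat \<delta>) n p \<le> (\<Sum>i<n. p (Suc i) - p i)"
    unfolding psum_def
  proof (rule sum_mono)
    fix i assume "i \<in> {..<n}"
    then have "p i \<in> {0..1}" "p (Suc i) \<in> {0..1}" "p i \<le> p (Suc i)" using rng mono by auto
    then show "\<bar>delta_hat \<delta> (p (Suc i)) - delta_hat \<delta> (p i)\<bar> \<le> p (Suc i) - p i"
      using h_lip[OF assms(1)] by blast
  qed
  also have "\<dots> = p n - p 0" by (rule sum_lessThan_telescope)
  finally show ?thesis using assms(4) ispart_def by auto
qed

lemma part_two: "x \<le> y \<Longrightarrow> ispart x y 1 (\<lambda>i. if i = 0 then x else y)"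
  unfolding ispart_def by auto

lemma tv_basic:
  assumes "diagonal_section \<delta>" "0 \<le> s" "s \<le> t1" "t1 \<le> 1"
  defines "S \<equiv> {psum (delta_hat \<delta>) n t | n t. ispart s t1 n t}"
  shows "S \<noteq> {}" "bdd_above S"
    "\<And>n p. ispart s t1 n p \<Longrightarrow> psum (delta_hat \<delta>) n p \<le> total_variation (delta_hat \<delta>) s t1"
    "total_variation (delta_hat \<delta>) s t1 \<le> t1 - s"
    "\<bar>delta_hat \<delta> t1 - delta_hat \<delta> s\<bar> \<le> total_variation (delta_hat \<delta>) s t1"
proof -
  show ne: "S \<noteq> {}" unfolding S_def using part_two[OF assms(3)] by blast
  show bdd: "bdd_above S" unfolding S_def bdd_above_def
    using psum_le[OF assms(1,2,4)] by blast
  show le: "\<And>n p. ispart s t1 n p \<Longrightarrow> psum (delta_hat \<delta>) n p \<le> total_variation (delta_hat \<delta>) s t1"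
    unfolding tv_eq by (rule cSup_upper) (use bdd S_def in auto)
  show "total_variation (delta_hat \<delta>) s t1 \<le> t1 - s"
    unfolding tv_eq by (rule cSup_least) (use ne S_def psum_le[OF assms(1,2,4)] in auto)
  have "psum (delta_hat \<delta>) 1 (\<lambda>i. if i = 0 then s else t1) = \<bar>delta_hat \<delta> t1 - delta_hat \<delta> s\<bar>"
    unfolding psum_def by simp
  then show "\<bar>delta_hat \<delta> t1 - delta_hat \<delta> s\<bar> \<le> total_variation (delta_hat \<delta>) s t1"
    using le[OF part_two[OF assms(3)]] by simp
qed



lemma tv_ext:
  assumes "diagonal_section \<delta>" "0 \<le> s" "s \<le> t1" "t1 \<le> 1"
  shows "total_variation (delta_hat \<delta>) 0 s + \<bar>delta_hat \<delta> t1 - delta_hat \<delta> s\<bar>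
         \<le> total_variation (delta_hat \<delta>) 0 t1"
proof -
  let ?h = "delta_hat \<delta>"
  let ?c = "\<bar>?h t1 - ?h s\<bar>"
  have "total_variation ?h 0 s \<le> total_variation ?h 0 t1 - ?c"
    unfolding tv_eq[of _ 0 s]
  proof (rule cSup_least)
    show "{psum ?h n t |n t. ispart 0 s n t} \<noteq> {}" using part_two[OF assms(2)] by blast
  next
    fix z assume "z \<in> {psum ?h n t |n t. ispart 0 s n t}"
    then obtain n p where z: "z = psum ?h n p" and p: "ispart 0 s n p" by blast
    define q where "q = p(Suc n := t1)"
    have qp: "ispart 0 t1 (Suc n) q" using p assms(3) unfolding ispart_def q_def by auto
    have "psum ?h (Suc n) q = psum ?h n p + ?c"
      unfolding psum_def q_def using p[unfolded ispart_def] by simp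
    then show "z \<le> total_variation ?h 0 t1 - ?c"
      using tv_basic(3)[OF assms(1) order_refl order_trans[OF assms(2,3)] assms(4) qp] z by simp
  qed
  then show ?thesis by simp
qed

lemma term_split:
  fixes h :: "real \<Rightarrow> real"
  assumes "u \<le> w"
  shows "\<bar>h w - h u\<bar> \<le> \<bar>h (min s w) - h (min s u)\<bar> + \<bar>h (max s w) - h (max s u)\<bar>"
proof (cases "w \<le> s")
  case True then show ?thesis using assms by (simp add: min_def max_def)
next
  case False
  then show ?thesis
  proof (cases "u \<le> s")
    case True
    then have "min s w = s" "min s u = u" "max s w = w" "max s u = s" using False by auto
    then show ?thesis by simp
  next
    case False
    then show ?thesis using \<open>\<not> w \<le> s\<close> by (simp add: min_def max_def)
  qed
qed

lemma tv_split:
  assumes "diagonal_section \<delta>" "0 \<le> s" "s \<le> t1" "t1 \<le> 1"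
  shows "total_variation (delta_hat \<delta>) 0 t1
         \<le> total_variation (delta_hat \<delta>) 0 s + total_variation (delta_hat \<delta>) s t1"
  unfolding tv_eq[of _ 0 t1]
proof (rule cSup_least)
  let ?h = "delta_hat \<delta>"
  show "{psum ?h n t |n t. ispart 0 t1 n t} \<noteq> {}"
    using part_two[OF order_trans[OF assms(2,3)]] by blast
next
  let ?h = "delta_hat \<delta>"
  fix z assume "z \<in> {psum ?h n t |n t. ispart 0 t1 n t}"
  then obtain n p where z: "z = psum ?h n p" and p: "ispart 0 t1 n p" by blast
  have p1: "ispart 0 s n (\<lambda>i. min s (p i))" using p assms unfolding ispart_def
    by (auto intro: min.mono)
  have p2: "ispart s t1 n (\<lambda>i. max s (p i))" using p assms unfolding ispart_def
    by (auto intro: max.mono)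
  have "psum ?h n p \<le> psum ?h n (\<lambda>i. min s (p i)) + psum ?h n (\<lambda>i. max s (p i))"
    unfolding psum_def sum.distrib[symmetric]
    by (rule sum_mono, rule term_split) (use p[unfolded ispart_def] in auto)
  also have "\<dots> \<le> total_variation ?h 0 s + total_variation ?h s t1"
    using tv_basic(3)[OF assms(1) order_refl assms(2) order_trans[OF assms(3,4)] p1]
      tv_basic(3)[OF assms(1) assms(2) assms(3,4) p2] by linarith
  finally show "z \<le> total_variation ?h 0 s + total_variation ?h s t1" using z by simp
qed

lemma aux_aa:
  fixes zz0 zz1 zz2 zz3 zz4 zz5 zz6 zz7 zz8 zz9 zz10 :: real
  assumes ad: "2*zz0 - 2*zz1 = zz3 - zz2 - zz6 + zz5"
    and e: "zz2 + \<bar>zz6 - zz5\<bar> \<le> zz3" and sp: "zz3 \<le> zz2 + zz4" and tb: "zz4 \<le> zz10 - zz9"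
    and zz5: "zz5 = zz9 - zz7" and zz6: "zz6 = zz10 - zz8" and dd: "zz7 \<le> zz8" "zz8 - zz7 \<le> 2*zz10 - 2*zz9"
  shows "zz1 \<le> zz0" "zz0 - zz1 \<le> zz10 - zz9" "zz0 - zz1 \<le> zz8 - zz7" "zz5 - zz6 \<le> zz0 - zz1"
proof -
  have g: "zz6 - zz5 \<le> \<bar>zz6 - zz5\<bar>" "zz5 - zz6 \<le> \<bar>zz6 - zz5\<bar>" by auto
  show "zz1 \<le> zz0" using ad e g by linarith
  show "zz0 - zz1 \<le> zz10 - zz9" using ad sp tb zz5 zz6 dd by linarith
  show "zz0 - zz1 \<le> zz8 - zz7" using ad sp tb zz5 zz6 dd by linarith
  show "zz5 - zz6 \<le> zz0 - zz1" using ad e g by linarith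
qed
lemma aux_kk:
  fixes ax ay zz2 zz3 T hx hy y dy :: real
  assumes "2*ax = zz2 - hx" "2*ay = zz3 - hy" "zz3 \<le> zz2 + T" "hy = y - dy"
  shows "y - (hx + hy + T) / 2 \<le> ax + (dy - ay)"
proof -
  have "(hx + hy + T) / 2 = hx/2 + hy/2 + T/2" by (simp add: add_divide_distrib)
  then show ?thesis using assms by linarith
qed

definition aa :: "(real \<Rightarrow> real) \<Rightarrow> real \<Rightarrow> real" where
  "aa \<delta> u = (total_variation (delta_hat \<delta>) 0 u - delta_hat \<delta> u) / 2"

lemma aa_props:
  assumes "diagonal_section \<delta>" "0 \<le> s" "s \<le> t1" "t1 \<le> 1"
  shows "aa \<delta> s \<le> aa \<delta> t1" "aa \<delta> t1 - aa \<delta> s \<le> t1 - s"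
    "aa \<delta> t1 - aa \<delta> s \<le> \<delta> t1 - \<delta> s"
    "delta_hat \<delta> s - delta_hat \<delta> t1 \<le> aa \<delta> t1 - aa \<delta> s"
proof -
  have e: "total_variation (delta_hat \<delta>) 0 s + \<bar>delta_hat \<delta> t1 - delta_hat \<delta> s\<bar>
         \<le> total_variation (delta_hat \<delta>) 0 t1" by (rule tv_ext[OF assms])
  have sp: "total_variation (delta_hat \<delta>) 0 t1
         \<le> total_variation (delta_hat \<delta>) 0 s + total_variation (delta_hat \<delta>) s t1"
    by (rule tv_split[OF assms])
  have tb: "total_variation (delta_hat \<delta>) s t1 \<le> t1 - s" by (rule tv_basic(4)[OF assms])
  have s01: "s \<in> {0..1}" "t1 \<in> {0..1}" using assms by auto
  have dd: "\<delta> s \<le> \<delta> t1" "\<delta> t1 - \<delta> s \<le> 2 * (t1 - s)" using ds_props(2)[OF assms(1) s01 assms(3)] by auto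
  have ad: "2 * aa \<delta> t1 - 2 * aa \<delta> s = total_variation (delta_hat \<delta>) 0 t1 - total_variation (delta_hat \<delta>) 0 s
     - delta_hat \<delta> t1 + delta_hat \<delta> s" unfolding aa_def by (simp add: field_simps)
  have hh: "delta_hat \<delta> s = s - \<delta> s" "delta_hat \<delta> t1 = t1 - \<delta> t1" unfolding delta_hat_def by auto
  have dd2: "\<delta> t1 - \<delta> s \<le> 2 * t1 - 2 * s" using dd(2) by simp
  note X = aux_aa[OF ad e sp tb hh dd(1) dd2]
  show "aa \<delta> s \<le> aa \<delta> t1" "aa \<delta> t1 - aa \<delta> s \<le> t1 - s"
    "aa \<delta> t1 - aa \<delta> s \<le> \<delta> t1 - \<delta> s"
    "delta_hat \<delta> s - delta_hat \<delta> t1 \<le> aa \<delta> t1 - aa \<delta> s" using X by auto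
qed



lemma min3:
  fixes u1 u2 v1 v2 A1 A2 B1 B2 :: real
  assumes "u1 \<le> u2" "v1 \<le> v2" "A1 \<le> A2" "A2 - A1 \<le> u2 - u1" "B1 \<le> B2" "B2 - B1 \<le> v2 - v1"
  shows "min u2 (min v2 (A2+B2)) + min u1 (min v1 (A1+B1)) - min u2 (min v1 (A2+B1)) - min u1 (min v2 (A1+B2)) \<ge> 0"
  using assms by (smt (verit))

lemma copula_transpose:
  assumes "copula C" shows "copula (\<lambda>u v. C v u)"
proof -
  have r: "\<forall>x\<in>{0..1}. \<forall>y\<in>{0..1}. C x y \<in> {0..1}"
    and b: "\<forall>x\<in>{0..1}. C x 0 = 0 \<and> C 0 x = 0 \<and> C x 1 = x \<and> C 1 x = x"
    and i: "\<forall>a\<in>{0..1}. \<forall>b\<in>{0..1}. \<forall>c\<in>{0..1}. \<forall>d\<in>{0..1}.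
        a \<le> b \<longrightarrow> c \<le> d \<longrightarrow> C b d + C a c - C b c - C a d \<ge> 0"
    using assms unfolding copula_def by blast+
  show ?thesis unfolding copula_def
  proof (intro conjI ballI impI)
    fix x y :: real assume "x \<in> {0..1}" "y \<in> {0..1}"
    then show "C y x \<in> {0..1}" using r by blast
  next
    fix x :: real assume "x \<in> {0..1}"
    then show "C 0 x = 0" "C x 0 = 0" "C 1 x = x" "C x 1 = x" using b by auto
  next
    fix a b c d :: real
    assume "a \<in> {0..1}" "b \<in> {0..1}" "c \<in> {0..1}" "d \<in> {0..1}" "a \<le> b" "c \<le> d"
    then have "C d b + C c a - C d a - C c b \<ge> 0" using i by blast
    then show "0 \<le> C d b + C c a - C c b - C d a" by simp
  qed
qed

definition KK :: "(real \<Rightarrow> real) \<Rightarrow> real \<Rightarrow> real \<Rightarrow> real" where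
  "KK \<delta> u v = min u (min v (aa \<delta> u + (\<delta> v - aa \<delta> v)))"

lemma KK_copula:
  assumes ds: "diagonal_section \<delta>"
  shows "copula (KK \<delta>)" "\<forall>t\<in>{0..1}. KK \<delta> t t = \<delta> t"
proof -
  note P = aa_props[OF ds]
  have d0: "\<delta> 0 = 0" and d1: "\<delta> 1 = 1" using ds_props[OF ds] by auto
  have pos: "aa \<delta> u + (\<delta> v - aa \<delta> v) \<ge> 0" if "u \<in> {0..1}" "v \<in> {0..1}" for u v
  proof -
    have "aa \<delta> 0 \<le> aa \<delta> u" using P(1)[of 0 u] that by auto
    moreover have "aa \<delta> v - aa \<delta> 0 \<le> \<delta> v - \<delta> 0" using P(3)[of 0 v] that by auto
    ultimately show ?thesis using d0 by linarith
  qed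
  show "\<forall>t\<in>{0..1}. KK \<delta> t t = \<delta> t"
  proof
    fix t :: real assume "t \<in> {0..1}"
    then have "\<delta> t \<le> t" using ds_props(1)[OF ds] by blast
    then show "KK \<delta> t t = \<delta> t" unfolding KK_def by simp
  qed
  show "copula (KK \<delta>)"
    unfolding copula_def
  proof (intro conjI ballI impI)
    fix x y :: real assume xy: "x \<in> {0..1}" "y \<in> {0..1}"
    have "0 \<le> KK \<delta> x y" using pos[OF xy] xy unfolding KK_def by simp
    moreover have "KK \<delta> x y \<le> x" unfolding KK_def by simp
    then have "KK \<delta> x y \<le> 1" using xy by simp
    ultimately show "KK \<delta> x y \<in> {0..1}" by simp
  next
    fix x :: real assume x: "x \<in> {0..1}"
    have z: "0 \<in> {0..(1::real)}" "1 \<in> {0..(1::real)}" by auto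
    show "KK \<delta> x 0 = 0" using pos[OF x z(1)] x unfolding KK_def by simp
    show "KK \<delta> 0 x = 0" using pos[OF z(1) x] x unfolding KK_def by simp
    have "aa \<delta> 1 - aa \<delta> x \<le> 1 - x" using P(2)[of x 1] x by auto
    then show "KK \<delta> x 1 = x" using x d1 unfolding KK_def by simp
    have "delta_hat \<delta> x - delta_hat \<delta> 1 \<le> aa \<delta> 1 - aa \<delta> x" using P(4)[of x 1] x by auto
    then show "KK \<delta> 1 x = x" using x d1 unfolding KK_def delta_hat_def by simp
  next
    fix a b c d :: real
    assume r: "a \<in> {0..1}" "b \<in> {0..1}" "c \<in> {0..1}" "d \<in> {0..1}" "a \<le> b" "c \<le> d"
    have r': "0 \<le> a" "b \<le> 1" "0 \<le> c" "d \<le> 1" using r by auto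
    have f1: "aa \<delta> a \<le> aa \<delta> b" using P(1)[OF r'(1) r(5) r'(2)] .
    have f2: "aa \<delta> b - aa \<delta> a \<le> b - a" using P(2)[OF r'(1) r(5) r'(2)] .
    have g4: "aa \<delta> d - aa \<delta> c \<le> \<delta> d - \<delta> c" using P(3)[OF r'(3) r(6) r'(4)] .
    have g5: "delta_hat \<delta> c - delta_hat \<delta> d \<le> aa \<delta> d - aa \<delta> c" using P(4)[OF r'(3) r(6) r'(4)] .
    have g6: "c - \<delta> c - (d - \<delta> d) \<le> aa \<delta> d - aa \<delta> c" using g5 unfolding delta_hat_def .
    have f3: "\<delta> c - aa \<delta> c \<le> \<delta> d - aa \<delta> d" using g4 by linarith
    have f4: "(\<delta> d - aa \<delta> d) - (\<delta> c - aa \<delta> c) \<le> d - c" using g6 by linarith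
    have "min b (min d (aa \<delta> b + (\<delta> d - aa \<delta> d))) + min a (min c (aa \<delta> a + (\<delta> c - aa \<delta> c)))
      - min b (min c (aa \<delta> b + (\<delta> c - aa \<delta> c))) - min a (min d (aa \<delta> a + (\<delta> d - aa \<delta> d))) \<ge> 0"
      by (rule min3[OF r(5,6) f1 f2 f3 f4])
    then show "0 \<le> KK \<delta> b d + KK \<delta> a c - KK \<delta> b c - KK \<delta> a d" unfolding KK_def by simp
  qed
qed

lemma KK_val:
  assumes ds: "diagonal_section \<delta>" "0 \<le> x" "x \<le> y" "y \<le> 1"
  shows "KK \<delta> x y \<ge> min x (min y (y - (delta_hat \<delta> x + delta_hat \<delta> y
        + total_variation (delta_hat \<delta>) x y) / 2))"
proof -
  have f3: "total_variation (delta_hat \<delta>) 0 y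
         \<le> total_variation (delta_hat \<delta>) 0 x + total_variation (delta_hat \<delta>) x y"
    by (rule tv_split[OF assms])
  have f1: "2 * aa \<delta> x = total_variation (delta_hat \<delta>) 0 x - delta_hat \<delta> x"
    "2 * aa \<delta> y = total_variation (delta_hat \<delta>) 0 y - delta_hat \<delta> y" unfolding aa_def by simp_all
  have f4: "delta_hat \<delta> y = y - \<delta> y" unfolding delta_hat_def by simp
  have "y - (delta_hat \<delta> x + delta_hat \<delta> y
        + total_variation (delta_hat \<delta>) x y) / 2 \<le> aa \<delta> x + (\<delta> y - aa \<delta> y)"
    by (rule aux_kk[OF f1 f3 f4])
  then show ?thesis unfolding KK_def by (auto intro!: min.mono)
qed



lemma cop_inc:
  assumes "copula C" "a \<in> {0..1}" "b \<in> {0..1}" "c \<in> {0..1}" "d \<in> {0..1}" "a \<le> b" "c \<le> d"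
  shows "0 \<le> C b d + C a c - C b c - C a d"
proof -
  have i: "\<forall>a\<in>{0..1}. \<forall>b\<in>{0..1}. \<forall>c\<in>{0..1}. \<forall>d\<in>{0..1}.
        a \<le> b \<longrightarrow> c \<le> d \<longrightarrow> C b d + C a c - C b c - C a d \<ge> 0"
    using assms(1) unfolding copula_def by blast
  show ?thesis using i assms(2-7) by blast
qed

lemma cop_bd:
  assumes "copula C" "x \<in> {0..1}"
  shows "C x 0 = 0" "C 0 x = 0" "C x 1 = x" "C 1 x = x"
proof -
  have b: "\<forall>x\<in>{0..1}. C x 0 = 0 \<and> C 0 x = 0 \<and> C x 1 = x \<and> C 1 x = x"
    using assms(1) unfolding copula_def by blast
  then show "C x 0 = 0" "C 0 x = 0" "C x 1 = x" "C 1 x = x" using assms(2) by blast+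
qed

lemma cop_le:
  assumes "copula C" "u \<in> {0..1}" "v \<in> {0..1}"
  shows "C u v \<le> u" "C u v \<le> v" "C u v \<le> 1"
proof -
  have r: "\<forall>x\<in>{0..1}. \<forall>y\<in>{0..1}. C x y \<in> {0..1}"
    using assms(1) unfolding copula_def by blast
  have z: "0 \<in> {0..(1::real)}" "1 \<in> {0..(1::real)}" by auto
  have "0 \<le> C u 1 + C 0 v - C u v - C 0 1"
    by (rule cop_inc[OF assms(1) z(1) assms(2) assms(3) z(2)]) (use assms in auto)
  moreover have "C u 1 = u" "C 0 v = 0" "C 0 1 = 0" using cop_bd[OF assms(1)] assms z by auto
  ultimately show "C u v \<le> u" by linarith
  have "0 \<le> C 1 v + C u 0 - C 1 0 - C u v"
    by (rule cop_inc[OF assms(1) assms(2) z(2) z(1) assms(3)]) (use assms in auto)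
  moreover have "C 1 v = v" "C u 0 = 0" "C 1 0 = 0" using cop_bd[OF assms(1)] assms z by auto
  ultimately show "C u v \<le> v" by linarith
  show "C u v \<le> 1" using r assms by auto
qed

lemma UB:
  assumes ds: "diagonal_section \<delta>" and cop: "copula C" and dg: "\<forall>t\<in>{0..1}. C t t = \<delta> t"
    and xy: "0 \<le> x" "x \<le> y" "y \<le> 1"
  shows "C x y \<le> y - (delta_hat \<delta> x + delta_hat \<delta> y + total_variation (delta_hat \<delta>) x y) / 2"
proof -
  let ?h = "delta_hat \<delta>"
  have z: "0 \<in> {0..(1::real)}" "1 \<in> {0..(1::real)}" by auto
  have key: "C p r \<le> C q r + C p q - \<delta> q" if "0 \<le> p" "p \<le> q" "q \<le> r" "r \<le> 1" for p q r
  proof -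
    have m: "p \<in> {0..1}" "q \<in> {0..1}" "r \<in> {0..1}" using that by auto
    have "0 \<le> C q r + C p q - C q q - C p r" by (rule cop_inc[OF cop m(1,2,2,3)]) (use that in auto)
    moreover have "C q q = \<delta> q" using dg m by blast
    ultimately show ?thesis by linarith
  qed
  have b1: "?h r \<le> r - C q r" if "0 \<le> q" "q \<le> r" "r \<le> 1" for q r
  proof -
    have m: "q \<in> {0..1}" "r \<in> {0..1}" using that by auto
    have "0 \<le> C r r + C q 0 - C r 0 - C q r" by (rule cop_inc[OF cop m(1,2) z(1) m(2)]) (use that in auto)
    moreover have "C r r = \<delta> r" using dg m by blast
    moreover have "C q 0 = 0" "C r 0 = 0" using cop_bd[OF cop] m by auto
    ultimately show ?thesis unfolding delta_hat_def by linarith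
  qed
  have b2: "?h q \<le> r - C q r" if "0 \<le> q" "q \<le> r" "r \<le> 1" for q r
  proof -
    have m: "q \<in> {0..1}" "r \<in> {0..1}" using that by auto
    have "0 \<le> C 1 r + C q q - C 1 q - C q r" by (rule cop_inc[OF cop m(1) z(2) m(1,2)]) (use that in auto)
    moreover have "C q q = \<delta> q" using dg m by blast
    moreover have "C 1 r = r" "C 1 q = q" using cop_bd[OF cop] m by auto
    ultimately show ?thesis unfolding delta_hat_def by linarith
  qed
  have claim: "?h x + ?h y + psum ?h n p \<le> 2 * y - 2 * C x y" if pp: "ispart x y n p" for n p
  proof -
    have mono: "\<forall>i<n. p i \<le> p (Suc i)" and p0: "p 0 = x" and pn: "p n = y"
      using pp unfolding ispart_def by auto
    have rng: "x \<le> p i \<and> p i \<le> y" if "i \<le> n" for i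
      using chain_mono[OF mono, of 0 i] chain_mono[OF mono, of i n] that p0 pn by auto
    have "\<forall>m. m \<le> n \<longrightarrow> ?h x + ?h (p m) + psum ?h m p \<le> 2 * p m - 2 * C x (p m)"
    proof (intro allI)
      fix m show "m \<le> n \<longrightarrow> ?h x + ?h (p m) + psum ?h m p \<le> 2 * p m - 2 * C x (p m)"
      proof (induction m)
        case 0
        have "x \<in> {0..1}" using xy by auto
        then have "C x x = \<delta> x" using dg by blast
        then show ?case using p0 by (simp add: psum_def delta_hat_def)
      next
        case (Suc m)
        show ?case
        proof
          assume sm: "Suc m \<le> n"
          then have IH: "?h x + ?h (p m) + psum ?h m p \<le> 2 * p m - 2 * C x (p m)" using Suc by simp
          have r1: "x \<le> p m" "p m \<le> y" using rng[of m] sm by auto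
          have r2: "x \<le> p (Suc m)" "p (Suc m) \<le> y" using rng[of "Suc m"] sm by auto
          have mm: "p m \<le> p (Suc m)" using mono sm by simp
          have k: "C x (p (Suc m)) \<le> C (p m) (p (Suc m)) + C x (p m) - \<delta> (p m)"
            by (rule key) (use xy r1 r2 mm in linarith)+
          have F1: "?h (p (Suc m)) \<le> p (Suc m) - C (p m) (p (Suc m))"
            by (rule b1) (use xy r1 r2 mm in linarith)+
          have F2: "?h (p m) \<le> p (Suc m) - C (p m) (p (Suc m))"
            by (rule b2) (use xy r1 r2 mm in linarith)+
          have F3: "\<bar>?h (p (Suc m)) - ?h (p m)\<bar> = ?h (p (Suc m)) - ?h (p m) \<or>
                    \<bar>?h (p (Suc m)) - ?h (p m)\<bar> = ?h (p m) - ?h (p (Suc m))" by linarith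
          have ps: "psum ?h (Suc m) p = psum ?h m p + \<bar>?h (p (Suc m)) - ?h (p m)\<bar>"
            unfolding psum_def by simp
          have hm: "?h (p m) = p m - \<delta> (p m)" unfolding delta_hat_def by simp
          show "?h x + ?h (p (Suc m)) + psum ?h (Suc m) p \<le> 2 * p (Suc m) - 2 * C x (p (Suc m))"
            using IH k F1 F2 F3 ps hm by linarith
        qed
      qed
    qed
    then show ?thesis using pn by auto
  qed
  have T: "total_variation ?h x y \<le> 2 * y - 2 * C x y - ?h x - ?h y"
    unfolding tv_eq[of _ x y]
  proof (rule cSup_least)
    show "{psum ?h n t |n t. ispart x y n t} \<noteq> {}" using part_two[OF xy(2)] by blast
  next
    fix z assume "z \<in> {psum ?h n t |n t. ispart x y n t}"
    then obtain n p where zz: "z = psum ?h n p" and pp: "ispart x y n p" by blast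
    show "z \<le> 2 * y - 2 * C x y - ?h x - ?h y" using claim[OF pp] zz by linarith
  qed
  have "(?h x + ?h y + total_variation ?h x y) / 2 = ?h x / 2 + ?h y / 2 + total_variation ?h x y / 2"
    by (simp add: add_divide_distrib)
  then show ?thesis using T by linarith
qed

theorem theorem3p6:
  fixes \<delta> :: "real \<Rightarrow> real" and x y :: real
  assumes "diagonal_section \<delta>" and "x \<in> {0..1}" and "y \<in> {0..1}"
  shows "upper_copula \<delta> x y =
    min x (min y (max x y - (delta_hat \<delta> x + delta_hat \<delta> y
        + total_variation (delta_hat \<delta>) (min x y) (max x y)) / 2))"
proof -
  let ?T = "min x (min y (max x y - (delta_hat \<delta> x + delta_hat \<delta> y
        + total_variation (delta_hat \<delta>) (min x y) (max x y)) / 2))"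
  define S where "S = {C x y | C. copula C \<and> (\<forall>t\<in>{0..1}. C t t = \<delta> t)}"
  have uc: "upper_copula \<delta> x y = Sup S" unfolding upper_copula_def S_def by simp
  note KK = KK_copula[OF assms(1)]
  have KT: "copula (\<lambda>u v. KK \<delta> v u)" "\<forall>t\<in>{0..1}. KK \<delta> t t = \<delta> t"
    using copula_transpose[OF KK(1)] KK(2) by auto
  have bdd: "bdd_above S" unfolding S_def bdd_above_def using cop_le(3) assms(2,3) by blast
  have ne: "S \<noteq> {}" unfolding S_def using KK by blast
  have x01: "0 \<le> x" "x \<le> 1" and y01: "0 \<le> y" "y \<le> 1" using assms(2,3) by auto
  have ub: "z \<le> ?T" if "z \<in> S" for z
  proof -
    obtain C where C: "z = C x y" "copula C" "\<forall>t\<in>{0..1}. C t t = \<delta> t" using \<open>z \<in> S\<close> S_def by blast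
    have l: "C x y \<le> x" "C x y \<le> y" using cop_le[OF C(2) assms(2,3)] by auto
    show ?thesis
    proof (cases "x \<le> y")
      case True
      have e1: "min x y = x" "max x y = y" using True by auto
      have u: "C x y \<le> y - (delta_hat \<delta> x + delta_hat \<delta> y + total_variation (delta_hat \<delta>) x y) / 2"
        by (rule UB[OF assms(1) C(2,3) x01(1) True y01(2)])
      show ?thesis unfolding e1 C(1) by (intro min.boundedI l u)
    next
      case False
      have e1: "min x y = y" "max x y = x" using False by auto
      have CT: "copula (\<lambda>u v. C v u)" "\<forall>t\<in>{0..1}. C t t = \<delta> t"
        using copula_transpose[OF C(2)] C(3) by auto
      have "C x y \<le> x - (delta_hat \<delta> y + delta_hat \<delta> x + total_variation (delta_hat \<delta>) y x) / 2"
        using UB[OF assms(1) CT y01(1) _ x01(2)] False by simp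
      then have u: "C x y \<le> x - (delta_hat \<delta> x + delta_hat \<delta> y + total_variation (delta_hat \<delta>) y x) / 2"
        by (subst add.commute[of "delta_hat \<delta> x"])
      show ?thesis unfolding e1 C(1) by (intro min.boundedI l u)
    qed
  qed
  have lb: "?T \<le> Sup S"
  proof (cases "x \<le> y")
    case True
    have e1: "min x y = x" "max x y = y" using True by auto
    have "?T \<le> KK \<delta> x y" unfolding e1 by (rule KK_val[OF assms(1) x01(1) True y01(2)])
    also have "KK \<delta> x y \<le> Sup S"
    proof (rule cSup_upper[OF _ bdd])
      show "KK \<delta> x y \<in> S" unfolding S_def using KK by blast
    qed
    finally show ?thesis .
  next
    case False
    have kv: "min y (min x (x - (delta_hat \<delta> y + delta_hat \<delta> x
        + total_variation (delta_hat \<delta>) y x) / 2)) \<le> KK \<delta> y x"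
      using KK_val[OF assms(1) y01(1) _ x01(2)] False by simp
    have e1: "min x y = y" "max x y = x" using False by auto
    have e2: "delta_hat \<delta> x + delta_hat \<delta> y = delta_hat \<delta> y + delta_hat \<delta> x" by (rule add.commute)
    have "?T = min x (min y (x - (delta_hat \<delta> y + delta_hat \<delta> x
        + total_variation (delta_hat \<delta>) y x) / 2))" unfolding e1 e2 by (rule refl)
    also have "\<dots> = min y (min x (x - (delta_hat \<delta> y + delta_hat \<delta> x
        + total_variation (delta_hat \<delta>) y x) / 2))" by (rule min.left_commute)
    also have "\<dots> \<le> KK \<delta> y x" by (rule kv)
    also have "KK \<delta> y x \<le> Sup S"
    proof (rule cSup_upper[OF _ bdd])
      show "KK \<delta> y x \<in> S" unfolding S_def mem_Collect_eq
        by (rule exI[of _ "\<lambda>u v. KK \<delta> v u"]) (use KT in simp)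
    qed
    finally show ?thesis .
  qed
  have "Sup S \<le> ?T" by (rule cSup_least[OF ne]) (rule ub)
  then show ?thesis using uc lb by linarith
qed

end
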